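(* Let $\mathbb{X},\mathbb{Y}$ be finite-dimensional real polyhedral Banach spaces and let $T\in\mathbb{L}(\mathbb{X},\mathbb{Y})$ be bijective. Then the following are equivalent: (a) $T$ preserves parallel pairs; (b) $T$ preserves TEA pairs; (c) for each $f\in\mathrm{Ext}\,B_{\mathbb{X}^*}$ there exists a unique $g\in\mathrm{Ext}\,B_{\mathbb{Y}^*}$ such that $T(\mathrm{Sm}(f))\subset\mathrm{Sm}(g)$.
   Context: A finite-dimensional Banach space is polyhedral if its unit ball has finitely many extreme points. $\mathrm{Ext}\,B_{\mathbb{X}^*}$ is the set of extreme points of the dual unit ball. For non-zero $x$, $J(x)=\{f\in S_{\mathbb{X}^*}: f(x)=\|x\|\}$. For $f\in\mathrm{Ext}\,B_{\mathbb{X}^*}$, $\mathrm{Sm}(f)=\{x\in\mathbb{X}: J(x)=\{f\}\}$. $(x,y)$ is a parallel pair if $\|x+\lambda y\|=\|x\|+\|y\|$ for some $\lambda$ with $|\lambda|=1$; a TEA pair if $\|x+y\|=\|x\|+\|y\|$. $T$ preserves parallel (resp. TEA) pairs if $(x,y)$ parallel (resp. TEA) in $\mathbb{X}$ implies $(Tx,Ty)$ parallel (resp. TEA) in $\mathbb{Y}$. *)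

theory Defs
  imports "HOL-Analysis.Analysis"
begin

definition fin_dim_space :: "'a::real_normed_vector itself \<Rightarrow> bool" where
  "fin_dim_space _ \<longleftrightarrow> (\<exists>B::'a set. finite B \<and> span B = UNIV)"

definition polyhedral :: "'a::real_normed_vector itself \<Rightarrow> bool" where
  "polyhedral _ \<longleftrightarrow> finite {x::'a. x extreme_point_of cball 0 1}"

definition dual_ball :: "('a::real_normed_vector \<Rightarrow> real) set" where
  "dual_ball = {f. bounded_linear f \<and> onorm f \<le> 1}"

definition dual_sphere :: "('a::real_normed_vector \<Rightarrow> real) set" where
  "dual_sphere = {f. bounded_linear f \<and> onorm f = 1}"

definition dual_ext :: "('a::real_normed_vector \<Rightarrow> real) set" where
  "dual_ext = {f \<in> dual_ball. \<forall>g\<in>dual_ball. \<forall>h\<in>dual_ball. \<forall>t::real.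
      0 < t \<and> t < 1 \<and> f = (\<lambda>x. t * g x + (1 - t) * h x) \<longrightarrow> g = h}"

definition supp_funcs :: "'a::real_normed_vector \<Rightarrow> ('a \<Rightarrow> real) set" ("J") where
  "J x = {f \<in> dual_sphere. f x = norm x}"

definition Sm :: "('a::real_normed_vector \<Rightarrow> real) \<Rightarrow> 'a set" where
  "Sm f = {x. x \<noteq> 0 \<and> J x = {f}}"

definition parallel_pair :: "'a::real_normed_vector \<Rightarrow> 'a \<Rightarrow> bool" where
  "parallel_pair x y \<longleftrightarrow> (\<exists>c::real. \<bar>c\<bar> = 1 \<and> norm (x + c *\<^sub>R y) = norm x + norm y)"

definition TEA_pair :: "'a::real_normed_vector \<Rightarrow> 'a \<Rightarrow> bool" where
  "TEA_pair x y \<longleftrightarrow> norm (x + y) = norm x + norm y"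

end

theory Submission
  imports Defs
begin

lemma dual_ball_bound:
  assumes "f \<in> dual_ball" shows "\<bar>f x\<bar> \<le> norm x"
proof -
  have bl: "bounded_linear f" and o: "onorm f \<le> 1" using assms by (auto simp: dual_ball_def)
  have "norm (f x) \<le> onorm f * norm x" by (rule onorm[OF bl])
  also have "\<dots> \<le> norm x" using mult_right_mono[OF o norm_ge_zero] by simp
  finally show ?thesis by simp
qed

lemma dual_ball_le: "f \<in> dual_ball \<Longrightarrow> f x \<le> norm x"
  using dual_ball_bound[of f x] by linarith

lemma dual_sphere_ball: "dual_sphere \<subseteq> dual_ball"
  by (auto simp: dual_sphere_def dual_ball_def)

lemma dual_ext_ball: "dual_ext \<subseteq> dual_ball"
  by (auto simp: dual_ext_def)

lemma TEA_by_functional: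
  assumes "f \<in> dual_ball" "f x = norm x" "f y = norm y"
  shows "TEA_pair x y"
proof -
  have bl: "bounded_linear f" using assms by (auto simp: dual_ball_def)
  have "f (x + y) = norm x + norm y" using assms linear_add[OF bounded_linear.linear[OF bl]] by simp
  moreover have "f (x + y) \<le> norm (x + y)" by (rule dual_ball_le[OF assms(1)])
  ultimately show ?thesis unfolding TEA_pair_def using norm_triangle_ineq[of x y] by linarith
qed

lemma TEA_J:
  assumes "TEA_pair a b" "h \<in> J (a + b)"
  shows "h \<in> J a" "h \<in> J b"
proof -
  have hb: "h \<in> dual_ball" and bl: "bounded_linear h" and "h (a+b) = norm (a+b)"
    using assms dual_sphere_ball by (auto simp: supp_funcs_def dual_sphere_def)
  then have "h a + h b = norm a + norm b" using assms(1)
    linear_add[OF bounded_linear.linear[OF bl]] by (simp add: TEA_pair_def)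
  moreover have "h a \<le> norm a" "h b \<le> norm b" using dual_ball_le[OF hb] by auto
  ultimately have "h a = norm a" "h b = norm b" by linarith+
  then show "h \<in> J a" "h \<in> J b" using assms by (auto simp: supp_funcs_def)
qed

lemma Sm_D:
  assumes "x \<in> Sm f" shows "x \<noteq> 0" "f \<in> dual_sphere" "f x = norm x" "f \<in> dual_ball" "J x = {f}"
  using assms dual_sphere_ball by (auto simp: Sm_def supp_funcs_def)

lemma Sm_TEA:
  assumes "x \<in> Sm f" "y \<in> Sm f" shows "TEA_pair x y"
  using Sm_D[OF assms(1)] Sm_D[OF assms(2)] TEA_by_functional by metis

lemma Sm_convex:
  assumes x: "x \<in> Sm f" and y: "y \<in> Sm f" and t: "0 \<le> t" "t \<le> 1"
  shows "(1 - t) *\<^sub>R x + t *\<^sub>R y \<in> Sm f"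
proof (cases "t = 1")
  case True then show ?thesis using y by simp
next
  case False
  with t have t1: "t < 1" by simp
  let ?z = "(1 - t) *\<^sub>R x + t *\<^sub>R y"
  have fs: "f \<in> dual_sphere" and fb: "f \<in> dual_ball" using Sm_D[OF x] by auto
  have bl: "bounded_linear f" using fs by (auto simp: dual_sphere_def)
  have lin: "linear f" using bl bounded_linear.linear by blast
  have fz: "f ?z = (1 - t) * norm x + t * norm y"
    using Sm_D[OF x] Sm_D[OF y] by (simp add: linear_add[OF lin] linear_scale[OF lin])
  have "norm ?z \<le> (1 - t) * norm x + t * norm y"
    using norm_triangle_ineq[of "(1 - t) *\<^sub>R x" "t *\<^sub>R y"] t by simp
  moreover have "f ?z \<le> norm ?z" by (rule dual_ball_le[OF fb])
  ultimately have nz: "norm ?z = (1 - t) * norm x + t * norm y" using fz by linarith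
  have "norm x > 0" using Sm_D[OF x] by simp
  then have "norm ?z > 0" using nz t1 t by (smt (verit) mult_nonneg_nonneg mult_pos_pos norm_ge_zero)
  then have z0: "?z \<noteq> 0" by auto
  have "J ?z = {f}"
  proof
    show "{f} \<subseteq> J ?z" using fs fz nz by (auto simp: supp_funcs_def)
    show "J ?z \<subseteq> {f}"
    proof
      fix h assume h: "h \<in> J ?z"
      then have hb: "h \<in> dual_ball" and hz: "h ?z = norm ?z" and hs: "h \<in> dual_sphere"
        using dual_sphere_ball by (auto simp: supp_funcs_def)
      have lh: "linear h" using hs by (auto simp: dual_sphere_def bounded_linear.linear)
      have "h ?z = (1 - t) * h x + t * h y" by (simp add: linear_add[OF lh] linear_scale[OF lh])
      moreover have "h x \<le> norm x" "h y \<le> norm y" using dual_ball_le[OF hb] by auto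
      ultimately have "(1 - t) * h x = (1 - t) * norm x" using hz nz t t1
        by (smt (verit) mult_left_mono)
      then have "h x = norm x" using t1 by simp
      then have "h \<in> J x" using hs by (simp add: supp_funcs_def)
      then show "h \<in> {f}" using Sm_D(5)[OF x] by simp
    qed
  qed
  then show ?thesis using z0 by (simp add: Sm_def)
qed

lemma linear_bij_inv:
  assumes "linear f" "bij f" shows "linear (inv f)"
proof -
  obtain g where g: "linear g" "f \<circ> g = id"
    using linear_surjective_right_inverse[OF assms(1)] assms(2) bij_is_surj by blast
  have "inv f = g"
  proof
    fix y show "inv f y = g y"
      using g(2) assms(2) by (metis bij_inv_eq_iff comp_apply id_apply)
  qed
  then show ?thesis using g by simp
qed

locale fdim =
  fixes phi :: "'a::real_normed_vector \<Rightarrow> 'n::euclidean_space"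
  assumes lin: "linear phi" and bij: "bij phi"
begin

definition psi where "psi = inv phi"

lemma psi_phi[simp]: "psi (phi x) = x"
  using bij unfolding psi_def by (simp add: bij_is_inj)

lemma phi_psi[simp]: "phi (psi v) = v"
  using bij unfolding psi_def by (simp add: bij_is_surj surj_f_inv_f)

lemma psi_lin: "linear psi" unfolding psi_def by (rule linear_bij_inv[OF lin bij])

lemma psi_bl: "bounded_linear psi" using psi_lin linear_conv_bounded_linear by blast

lemma phi_bl: "bounded_linear phi"
proof -
  have cont: "continuous_on (sphere (0::'n) 1) (\<lambda>v. norm (psi v))"
    by (intro continuous_intros linear_continuous_on psi_bl)
  have ne: "sphere (0::'n) 1 \<noteq> {}"
  proof -
    obtain b :: 'n where "b \<in> Basis" using nonempty_Basis by blast
    then show ?thesis by (auto intro!: exI[of _ b] simp: dist_norm)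
  qed
  obtain v0 where v0: "v0 \<in> sphere 0 1" "\<And>v. v \<in> sphere 0 1 \<Longrightarrow> norm (psi v0) \<le> norm (psi v)"
    using continuous_attains_inf[OF compact_sphere ne cont] by blast
  define m where "m = norm (psi v0)"
  have "psi v0 \<noteq> 0" using v0(1) by (metis linear_0[OF lin] norm_zero one_neq_zero mem_sphere_0 phi_psi)
  then have m: "m > 0" by (simp add: m_def)
  have "norm (phi x) \<le> norm x * (1 / m)" for x
  proof (cases "phi x = 0")
    case True then show ?thesis using m by simp
  next
    case False
    let ?v = "(1 / norm (phi x)) *\<^sub>R phi x"
    have "?v \<in> sphere 0 1" using False by simp
    then have "m \<le> norm (psi ?v)" using v0 m_def by auto
    also have "psi ?v = (1 / norm (phi x)) *\<^sub>R x" using linear_scale[OF psi_lin] by simp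
    finally have "m \<le> norm x / norm (phi x)" by simp
    then show ?thesis using m False by (simp add: field_simps)
  qed
  then have b: "\<And>x. norm (phi x) \<le> norm x * (1 / m)" .
  show ?thesis
  proof (rule bounded_linear_intro[where K="1/m"])
    show "phi (x + y) = phi x + phi y" for x y by (rule linear_add[OF lin])
    show "phi (r *\<^sub>R x) = r *\<^sub>R phi x" for r x by (rule linear_scale[OF lin])
  qed (rule b)
qed

lemma lin_bl:
  fixes f :: "'a \<Rightarrow> 'c::real_normed_vector"
  assumes "linear f" shows "bounded_linear f"
proof -
  have "linear (\<lambda>v. f (psi v))" using linear_compose[OF psi_lin assms] by (simp add: o_def)
  then have "bounded_linear (\<lambda>v. f (psi v))" using linear_conv_bounded_linear by blast
  from bounded_linear_compose[OF this phi_bl] show ?thesis by simp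
qed

lemma phi_inj: "inj phi" using bij bij_is_inj by blast

definition W where "W = {w::'n. \<forall>x. w \<bullet> phi x \<le> norm x}"
definition Lam where "Lam w = (\<lambda>x. w \<bullet> phi x)"
definition E' where "E' = {w. w extreme_point_of W}"

lemma W_bound: "w \<in> W \<Longrightarrow> \<bar>w \<bullet> phi x\<bar> \<le> norm x"
proof -
  assume w: "w \<in> W"
  have "w \<bullet> phi x \<le> norm x" "w \<bullet> phi (-x) \<le> norm (-x)" using w unfolding W_def by blast+
  moreover have "phi (-x) = - phi x" using linear_neg[OF lin] .
  ultimately show ?thesis by auto
qed

lemma Lam_bl: "bounded_linear (Lam w)"
  unfolding Lam_def by (intro bounded_linear_compose[OF bounded_linear_inner_right phi_bl])

lemma Lam_ball: "w \<in> W \<Longrightarrow> Lam w \<in> dual_ball"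
proof -
  assume w: "w \<in> W"
  have "onorm (Lam w) \<le> 1"
  proof (rule onorm_bound)
    show "(0::real) \<le> 1" by simp
    fix x show "norm (Lam w x) \<le> 1 * norm x" using W_bound[OF w, of x] by (simp add: Lam_def)
  qed
  then show ?thesis using Lam_bl by (simp add: dual_ball_def)
qed

lemma Lam_inj: "Lam a = Lam b \<Longrightarrow> a = b"
proof -
  assume "Lam a = Lam b"
  then have "a \<bullet> phi (psi (a - b)) = b \<bullet> phi (psi (a - b))" by (metis Lam_def)
  then have "(a - b) \<bullet> (a - b) = 0" by (simp add: inner_diff_left)
  then show "a = b" by simp
qed

definition wf where "wf f = (\<Sum>b\<in>Basis. f (psi b) *\<^sub>R b)"

lemma wf_rep: assumes "linear f" shows "f x = wf f \<bullet> phi x"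
proof -
  have "f x = f (psi (\<Sum>b\<in>Basis. (phi x \<bullet> b) *\<^sub>R b))" by (simp add: euclidean_representation)
  also have "\<dots> = (\<Sum>b\<in>Basis. (phi x \<bullet> b) * f (psi b))"
  proof -
    have g: "linear (\<lambda>v. f (psi v))" using linear_compose[OF psi_lin assms] by (simp add: o_def)
    show ?thesis by (simp add: linear_sum[OF g] linear_scale[OF g])
  qed
  also have "\<dots> = wf f \<bullet> phi x" by (simp add: wf_def inner_sum_right inner_commute mult.commute)
  finally show ?thesis .
qed

lemma ball_Lam: "f \<in> dual_ball \<Longrightarrow> wf f \<in> W \<and> f = Lam (wf f)"
proof -
  assume f: "f \<in> dual_ball"
  then have l: "linear f" by (auto simp: dual_ball_def bounded_linear.linear)
  show ?thesis using wf_rep[OF l] dual_ball_le[OF f] by (auto simp: W_def Lam_def)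
qed

lemma Lam_comb: "Lam ((1 - u) *\<^sub>R a + u *\<^sub>R b) = (\<lambda>x. u * Lam b x + (1 - u) * Lam a x)"
  by (auto simp: Lam_def inner_add_left)

lemma dual_ext_eq: "dual_ext = Lam ` E'"
proof
  show "dual_ext \<subseteq> Lam ` E'"
  proof
    fix f :: "'a \<Rightarrow> real" assume f: "f \<in> dual_ext"
    then have fb: "f \<in> dual_ball" by (auto simp: dual_ext_def)
    from ball_Lam[OF fb] have w: "wf f \<in> W" "f = Lam (wf f)" by auto
    have "wf f extreme_point_of W"
      unfolding extreme_point_of_def
    proof (intro conjI ballI)
      show "wf f \<in> W" by fact
      fix a b assume a: "a \<in> W" and b: "b \<in> W"
      show "wf f \<notin> open_segment a b"
      proof
        assume "wf f \<in> open_segment a b"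
        then obtain u where u: "a \<noteq> b" "0 < u" "u < 1" "wf f = (1 - u) *\<^sub>R a + u *\<^sub>R b"
          by (auto simp: in_segment)
        have "f = (\<lambda>x. u * Lam b x + (1 - u) * Lam a x)" using w(2) u(4) Lam_comb[of u a b] by simp
        then have "Lam b = Lam a" using f Lam_ball[OF a] Lam_ball[OF b] u(2,3)
          unfolding dual_ext_def by blast
        then show False using Lam_inj u(1) by metis
      qed
    qed
    then show "f \<in> Lam ` E'" using w by (auto simp: E'_def)
  qed
  show "Lam ` E' \<subseteq> dual_ext"
  proof
    fix f :: "'a \<Rightarrow> real" assume "f \<in> Lam ` E'"
    then obtain w0 where w0: "w0 extreme_point_of W" "f = Lam w0" by (auto simp: E'_def)
    then have w0W: "w0 \<in> W" by (auto simp: extreme_point_of_def)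
    show "f \<in> dual_ext" unfolding dual_ext_def
    proof (intro CollectI conjI ballI allI impI)
      show "f \<in> dual_ball" using Lam_ball[OF w0W] w0 by simp
      fix g h t assume g: "g \<in> dual_ball" and h: "h \<in> dual_ball"
        and ht: "0 < t \<and> t < 1 \<and> f = (\<lambda>x. t * g x + (1 - t) * h x)"
      obtain b a where b: "b \<in> W" "g = Lam b" and a: "a \<in> W" "h = Lam a"
        using ball_Lam[OF g] ball_Lam[OF h] by blast
      have "Lam w0 = Lam ((1 - t) *\<^sub>R a + t *\<^sub>R b)" using ht w0(2) a(2) b(2) Lam_comb[of t a b] by simp
      then have eq: "w0 = (1 - t) *\<^sub>R a + t *\<^sub>R b" by (rule Lam_inj)
      show "g = h"
      proof (rule ccontr)
        assume "g \<noteq> h"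
        then have "a \<noteq> b" using a b by auto
        then have "w0 \<in> open_segment a b" using eq ht by (auto simp: in_segment)
        then show False using w0(1) a b by (auto simp: extreme_point_of_def)
      qed
    qed
  qed
qed

end

locale pfdim = fdim phi for phi :: "'a::real_normed_vector \<Rightarrow> 'n::euclidean_space" +
  assumes poly: "polyhedral TYPE('a)"
begin

definition K where "K = phi ` cball 0 1"
definition extK where "extK = {k. k extreme_point_of K}"

lemma K_eq: "K = {v. norm (psi v) \<le> 1}"
  unfolding K_def
  apply (auto simp: image_iff)
  subgoal for v by (rule bexI[of _ "psi v"]) auto
  done

lemma K_compact: "compact K"
proof -
  have "continuous_on UNIV (\<lambda>v. norm (psi v))"
    by (intro continuous_intros linear_continuous_on psi_bl)
  then have "closed K" unfolding K_eq by (intro closed_Collect_le) auto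
  moreover have "bounded K" unfolding K_def by (intro bounded_linear_image phi_bl bounded_cball)
  ultimately show ?thesis by (simp add: compact_eq_bounded_closed)
qed

lemma K_convex: "convex K"
  unfolding K_def by (intro convex_linear_image lin convex_cball)

lemma extK_sub: "extK \<subseteq> phi ` {p. p extreme_point_of cball 0 1}"
proof
  fix k assume "k \<in> extK"
  then have k: "k extreme_point_of K" by (simp add: extK_def)
  have "psi k extreme_point_of cball 0 1"
    unfolding extreme_point_of_def
  proof (intro conjI ballI)
    show "psi k \<in> cball 0 1" using k by (auto simp: extreme_point_of_def K_eq)
    fix a b assume a: "a \<in> cball (0::'a) 1" and b: "b \<in> cball (0::'a) 1"
    show "psi k \<notin> open_segment a b"
    proof
      assume "psi k \<in> open_segment a b"
      then have "phi (psi k) \<in> phi ` open_segment a b" by blast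
      then have "k \<in> open_segment (phi a) (phi b)"
        using open_segment_linear_image[OF lin phi_inj] by simp
      moreover have "phi a \<in> K" "phi b \<in> K" using a b by (auto simp: K_def)
      ultimately show False using k by (auto simp: extreme_point_of_def)
    qed
  qed
  then show "k \<in> phi ` {p. p extreme_point_of cball 0 1}"
    by (intro image_eqI[of _ _ "psi k"]) auto
qed

lemma extK_finite: "finite extK"
  using poly extK_sub finite_subset unfolding polyhedral_def by blast

lemma W_eq: "W = \<Inter> ((\<lambda>k. {w. k \<bullet> w \<le> 1}) ` extK)"
proof
  show "W \<subseteq> \<Inter> ((\<lambda>k. {w. k \<bullet> w \<le> 1}) ` extK)"
  proof (clarify)
    fix w k assume w: "w \<in> W" and k: "k \<in> extK"
    then obtain x where x: "norm x \<le> 1" "k = phi x"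
      by (auto simp: extK_def extreme_point_of_def K_def)
    have "w \<bullet> phi x \<le> norm x" using w by (simp add: W_def)
    then show "k \<bullet> w \<le> 1" using x by (simp add: inner_commute)
  qed
  show "\<Inter> ((\<lambda>k. {w. k \<bullet> w \<le> 1}) ` extK) \<subseteq> W"
  proof
    fix w assume w: "w \<in> \<Inter> ((\<lambda>k. {w. k \<bullet> w \<le> 1}) ` extK)"
    have "extK \<subseteq> {v. w \<bullet> v \<le> 1}" using w by (auto simp: inner_commute)
    then have "convex hull extK \<subseteq> {v. w \<bullet> v \<le> 1}"
      by (intro hull_minimal convex_halfspace_le)
    moreover have "K = convex hull extK"
      unfolding extK_def by (rule Krein_Milman_Minkowski[OF K_compact K_convex])
    ultimately have KH: "\<And>v. v \<in> K \<Longrightarrow> w \<bullet> v \<le> 1" by blast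
    show "w \<in> W" unfolding W_def
    proof (intro CollectI allI)
      fix x
      show "w \<bullet> phi x \<le> norm x"
      proof (cases "x = 0")
        case True then show ?thesis by (simp add: linear_0[OF lin])
      next
        case False
        let ?y = "(1 / norm x) *\<^sub>R x"
        have "phi ?y \<in> K" using False by (auto simp: K_def)
        then have "w \<bullet> phi ?y \<le> 1" by (rule KH)
        then have "(1 / norm x) * (w \<bullet> phi x) \<le> 1" by (simp add: linear_scale[OF lin])
        then show ?thesis using False by (simp add: field_simps)
      qed
    qed
  qed
qed

lemma W_polyhedron: "polyhedron W"
  unfolding W_eq using extK_finite by (intro polyhedron_Inter) (auto intro: polyhedron_halfspace_le)

lemma W_bounded: "bounded W"
proof -
  obtain C where C: "C > 0" "\<And>v. norm (psi v) \<le> norm v * C"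
    using bounded_linear.pos_bounded[OF psi_bl] by blast
  have "norm w \<le> C" if w: "w \<in> W" for w
  proof -
    have "w \<bullet> w = w \<bullet> phi (psi w)" by simp
    also have "\<dots> \<le> norm (psi w)" using w unfolding W_def by blast
    also have "\<dots> \<le> norm w * C" by (rule C(2))
    finally have "norm w * norm w \<le> norm w * C" by (simp add: power2_norm_eq_inner[symmetric] power2_eq_square)
    then show ?thesis using C(1) by (cases "w = 0") auto
  qed
  then show ?thesis unfolding bounded_iff by blast
qed

lemma W_compact: "compact W"
  using W_bounded polyhedron_imp_closed[OF W_polyhedron] by (simp add: compact_eq_bounded_closed)

lemma W_convex: "convex W" by (rule polyhedron_imp_convex[OF W_polyhedron])

lemma E'_finite: "finite E'"
  unfolding E'_def by (rule finite_polyhedron_extreme_points[OF W_polyhedron])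

lemma W_hull: "W = convex hull E'"
  unfolding E'_def by (rule Krein_Milman_Minkowski[OF W_compact W_convex])

lemma zero_W: "0 \<in> W" by (simp add: W_def)

lemma E'_ne: "E' \<noteq> {}" using W_hull zero_W by auto

lemma E'_W: "E' \<subseteq> W" by (auto simp: E'_def extreme_point_of_def)

end

context pfdim begin

lemma nontriv: "\<exists>x::'a. x \<noteq> 0"
proof -
  obtain b :: 'n where "b \<in> Basis" using nonempty_Basis by blast
  then have "b \<noteq> 0" by auto
  then have "psi b \<noteq> 0" by (metis linear_0[OF lin] phi_psi)
  then show ?thesis by blast
qed

lemma Lam_cont: "continuous_on UNIV (Lam w)"
  by (rule linear_continuous_on[OF Lam_bl])

lemma HB: "\<exists>w\<in>W. w \<bullet> phi x = norm x"
proof (cases "x = 0")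
  case True then show ?thesis using zero_W by (intro bexI[of _ 0]) auto
next
  case False
  define S where "S = {v. norm (psi v) < 1}"
  have contn: "continuous_on UNIV (\<lambda>v. norm (psi v))"
    by (intro continuous_intros linear_continuous_on psi_bl)
  have oS: "open S" unfolding S_def by (rule open_Collect_less[OF contn]) auto
  have S_img: "S = phi ` ball 0 1"
    unfolding S_def
    apply (auto simp: image_iff)
    subgoal for v by (rule bexI[of _ "psi v"]) auto
    done
  have cS: "convex S" unfolding S_img by (intro convex_linear_image lin convex_ball)
  define u where "u = (1 / norm x) *\<^sub>R x"
  have nu: "norm u = 1" using False by (simp add: u_def)
  define x' where "x' = phi u"
  have x'S: "x' \<notin> S" using nu by (simp add: S_def x'_def)
  have x'cl: "x' \<in> closure S"
    unfolding closure_approachable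
  proof (intro allI impI)
    fix e :: real assume e: "e > 0"
    define d where "d = min (1/2) (e / (norm x' + 1))"
    have d: "0 < d" "d < 1" "d * norm x' < e"
    proof -
      have "norm x' + 1 > 0" using norm_ge_zero[of x'] by linarith
      then have "0 < e / (norm x' + 1)" using e by simp
      then show "0 < d" "d < 1" by (auto simp: d_def)
      have "d * norm x' \<le> (e / (norm x' + 1)) * norm x'"
        by (intro mult_right_mono) (auto simp: d_def)
      also have "\<dots> < e"
      proof -
        have p: "norm x' + 1 > 0" using norm_ge_zero[of x'] by linarith
        have "e * norm x' < e * (norm x' + 1)" using e by simp
        then show ?thesis using p by (simp add: field_simps)
      qed
      finally show "d * norm x' < e" .
    qed
    have "psi ((1 - d) *\<^sub>R x') = (1 - d) *\<^sub>R u" by (simp add: linear_scale[OF psi_lin] x'_def)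
    then have "(1 - d) *\<^sub>R x' \<in> S" using nu d by (simp add: S_def)
    moreover have "dist ((1 - d) *\<^sub>R x') x' = d * norm x'"
      using d by (simp add: dist_norm algebra_simps)
    ultimately show "\<exists>y\<in>S. dist y x' < e" using d(3) by (intro bexI[of _ "(1 - d) *\<^sub>R x'"]) auto
  qed
  have "x' \<notin> rel_interior S" using x'S rel_interior_open[OF oS] by simp
  then obtain a where a: "a \<noteq> 0" "\<And>y. y \<in> rel_interior S \<Longrightarrow> a \<bullet> x' < a \<bullet> y"
    using supporting_hyperplane_relative_frontier[OF cS x'cl] by metis
  have aS: "\<And>y. y \<in> S \<Longrightarrow> a \<bullet> x' < a \<bullet> y" using a(2) rel_interior_open[OF oS] by simp
  have "0 \<in> S" by (simp add: S_def linear_0[OF psi_lin])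
  then have c: "- (a \<bullet> x') > 0" using aS[of 0] by simp
  define c where "c = - (a \<bullet> x')"
  define w where "w = (- 1 / c) *\<^sub>R a"
  have wW: "w \<in> W" unfolding W_def
  proof (intro CollectI allI)
    fix z
    have lt: "w \<bullet> phi z < r" if r: "r > norm z" for r
    proof -
      have r0: "r > 0" using r norm_ge_zero[of z] by linarith
      have "psi (phi ((1 / r) *\<^sub>R z)) = (1 / r) *\<^sub>R z" by simp
      then have "phi ((1 / r) *\<^sub>R z) \<in> S" using r r0 by (simp add: S_def field_simps)
      then have "a \<bullet> x' < a \<bullet> phi ((1 / r) *\<^sub>R z)" by (rule aS)
      then have "- c < (1 / r) * (a \<bullet> phi z)" by (simp add: c_def linear_scale[OF lin])
      then have "- c * r < a \<bullet> phi z" using r0 by (simp add: field_simps)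
      then show ?thesis using c c_def r0 by (simp add: w_def field_simps)
    qed
    show "w \<bullet> phi z \<le> norm z"
    proof (rule ccontr)
      assume na: "\<not> w \<bullet> phi z \<le> norm z"
      then have "norm z < (w \<bullet> phi z + norm z) / 2" by simp
      from lt[OF this] na show False by (simp add: field_simps)
    qed
  qed
  have "w \<bullet> x' = 1" using c by (simp add: w_def c_def)
  moreover have "phi x = norm x *\<^sub>R x'"
    using False by (simp add: x'_def u_def linear_scale[OF lin])
  ultimately have "w \<bullet> phi x = norm x" by simp
  then show ?thesis using wW by blast
qed

lemma sep:
  assumes w0: "w0 \<in> E'"
  shows "\<exists>z. \<forall>v\<in>E' - {w0}. v \<bullet> phi z < w0 \<bullet> phi z"
proof -
  define H where "H = convex hull (E' - {w0})"
  have clH: "closed H" unfolding H_def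
    by (intro compact_imp_closed finite_imp_compact_convex_hull) (use E'_finite in auto)
  have cH: "convex H" unfolding H_def by simp
  have "convex (W - {w0})" using w0 extreme_point_of_stillconvex[OF W_convex] by (simp add: E'_def)
  moreover have "E' - {w0} \<subseteq> W - {w0}" using E'_W by auto
  ultimately have "H \<subseteq> W - {w0}" unfolding H_def by (intro hull_minimal)
  then have "w0 \<notin> H" by auto
  then obtain a b where ab: "a \<bullet> w0 < b" "\<forall>x\<in>H. b < a \<bullet> x"
    using separating_hyperplane_closed_point[OF cH clH] by blast
  have "\<forall>v\<in>E' - {w0}. v \<bullet> phi (psi (- a)) < w0 \<bullet> phi (psi (- a))"
  proof
    fix v assume "v \<in> E' - {w0}"
    then have "v \<in> H" unfolding H_def by (rule hull_inc)
    then have "b < a \<bullet> v" using ab by blast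
    then show "v \<bullet> phi (psi (- a)) < w0 \<bullet> phi (psi (- a))" using ab(1) by (simp add: inner_commute)
  qed
  then show ?thesis by blast
qed

lemma Lam_J:
  assumes "w \<in> W" "x \<noteq> 0" "w \<bullet> phi x = norm x"
  shows "Lam w \<in> J x"
proof -
  have b: "Lam w \<in> dual_ball" by (rule Lam_ball[OF assms(1)])
  then have le: "onorm (Lam w) \<le> 1" by (simp add: dual_ball_def)
  have "norm (Lam w x) / norm x \<le> onorm (Lam w)" by (rule le_onorm[OF Lam_bl])
  then have "1 \<le> onorm (Lam w)" using assms by (simp add: Lam_def)
  then have "Lam w \<in> dual_sphere" using le Lam_bl by (simp add: dual_sphere_def)
  then show ?thesis using assms by (simp add: supp_funcs_def Lam_def)
qed

lemma N1a: "\<exists>v\<in>E'. v \<bullet> phi x = norm x"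
proof -
  obtain w where w: "w \<in> W" "w \<bullet> phi x = norm x" using HB by blast
  define M where "M = Max ((\<lambda>v. v \<bullet> phi x) ` E')"
  have fin: "finite ((\<lambda>v. v \<bullet> phi x) ` E')" using E'_finite by simp
  have ne: "(\<lambda>v. v \<bullet> phi x) ` E' \<noteq> {}" using E'_ne by simp
  obtain v where v: "v \<in> E'" "v \<bullet> phi x = M" using Max_in[OF fin ne] unfolding M_def by auto
  have "E' \<subseteq> {u. phi x \<bullet> u \<le> M}" using Max_ge[OF fin] unfolding M_def by (auto simp: inner_commute)
  then have "convex hull E' \<subseteq> {u. phi x \<bullet> u \<le> M}" by (intro hull_minimal convex_halfspace_le)
  then have "w \<bullet> phi x \<le> M" using w(1) W_hull by (auto simp: inner_commute)
  moreover have "v \<bullet> phi x \<le> norm x" using v(1) E'_W by (auto simp: W_def)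
  ultimately show ?thesis using v w by auto
qed

lemma N1b:
  assumes h: "h \<in> J x" and g: "\<And>v. v \<in> E' \<Longrightarrow> v \<bullet> phi x = norm x \<Longrightarrow> Lam v = g"
  shows "h = g"
proof -
  have hb: "h \<in> dual_ball" and hx: "h x = norm x" using h dual_sphere_ball by (auto simp: supp_funcs_def)
  obtain wh where wh: "wh \<in> W" "h = Lam wh" using ball_Lam[OF hb] by blast
  then have "wh \<in> convex hull E'" using W_hull by simp
  then obtain u where u: "\<forall>v\<in>E'. 0 \<le> u v" "sum u E' = 1" "(\<Sum>v\<in>E'. u v *\<^sub>R v) = wh"
    using convex_hull_finite[OF E'_finite] by auto
  have hy: "h y = (\<Sum>v\<in>E'. u v * (v \<bullet> phi y))" for y
    using wh(2) u(3)[symmetric] by (simp add: Lam_def inner_sum_left)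
  have vle: "v \<bullet> phi x \<le> norm x" if "v \<in> E'" for v using that E'_W by (auto simp: W_def)
  have "(\<Sum>v\<in>E'. u v * (norm x - v \<bullet> phi x)) = (\<Sum>v\<in>E'. u v) * norm x - (\<Sum>v\<in>E'. u v * (v \<bullet> phi x))"
    by (simp add: algebra_simps sum_subtractf sum_distrib_right sum_distrib_left)
  also have "\<dots> = 0" using u(2) hy[of x] hx by simp
  moreover have nn: "\<And>v. v \<in> E' \<Longrightarrow> 0 \<le> u v * (norm x - v \<bullet> phi x)"
    using u(1) vle by simp
  ultimately have "\<forall>v\<in>E'. u v * (norm x - v \<bullet> phi x) = 0"
    using sum_nonneg_eq_0_iff[OF E'_finite nn] by simp
  then have uv: "\<And>v. v \<in> E' \<Longrightarrow> u v \<noteq> 0 \<Longrightarrow> Lam v = g" using g by auto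
  show "h = g"
  proof
    fix y
    have "h y = (\<Sum>v\<in>E'. u v * g y)"
      unfolding hy
    proof (rule sum.cong[OF refl])
      fix v assume "v \<in> E'"
      then show "u v * (v \<bullet> phi y) = u v * g y"
        using uv[of v] by (cases "u v = 0") (auto simp: Lam_def)
    qed
    also have "\<dots> = g y" using u(2) by (simp add: sum_distrib_right[symmetric])
    finally show "h y = g y" .
  qed
qed

end

context pfdim begin

lemma E'_le: "v \<in> E' \<Longrightarrow> v \<bullet> phi x \<le> norm x"
  using E'_W by (auto simp: W_def)

lemma SmI:
  assumes w0: "w0 \<in> E'" and x: "x \<noteq> 0" and lt: "\<forall>v\<in>E' - {w0}. v \<bullet> phi x < w0 \<bullet> phi x"
  shows "x \<in> Sm (Lam w0)"
proof -
  obtain v where v: "v \<in> E'" "v \<bullet> phi x = norm x" using N1a by blast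
  have "v = w0"
  proof (rule ccontr)
    assume "v \<noteq> w0"
    then have "v \<in> E' - {w0}" using v(1) by simp
    then have "v \<bullet> phi x < w0 \<bullet> phi x" using lt by blast
    then show False using v E'_le[OF w0, of x] by simp
  qed
  then have w0x: "w0 \<bullet> phi x = norm x" using v by simp
  have "J x = {Lam w0}"
  proof
    show "{Lam w0} \<subseteq> J x" using Lam_J[OF _ x w0x] w0 E'_W by auto
    show "J x \<subseteq> {Lam w0}"
    proof
      fix h assume h: "h \<in> J x"
      have "h = Lam w0"
      proof (rule N1b[OF h])
        fix v assume v: "v \<in> E'" "v \<bullet> phi x = norm x"
        show "Lam v = Lam w0"
        proof (cases "v = w0")
          case False
          then have "v \<in> E' - {w0}" using v(1) by simp
          then have "v \<bullet> phi x < w0 \<bullet> phi x" using lt by blast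
          then show ?thesis using v E'_le[OF w0, of x] by simp
        qed simp
      qed
      then show "h \<in> {Lam w0}" by simp
    qed
  qed
  then show ?thesis using x by (simp add: Sm_def)
qed

lemma SmD:
  assumes w0: "w0 \<in> E'" and x: "x \<in> Sm (Lam w0)"
  shows "\<forall>v\<in>E' - {w0}. v \<bullet> phi x < w0 \<bullet> phi x"
proof
  fix v assume v: "v \<in> E' - {w0}"
  have w0x: "w0 \<bullet> phi x = norm x" using Sm_D(3)[OF x] by (simp add: Lam_def)
  show "v \<bullet> phi x < w0 \<bullet> phi x"
  proof (rule ccontr)
    assume "\<not> v \<bullet> phi x < w0 \<bullet> phi x"
    then have "v \<bullet> phi x = norm x" using E'_le[of v x] v w0x by auto
    then have "Lam v \<in> J x" using Lam_J[of v x] v E'_W Sm_D(1)[OF x] by auto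
    then have "Lam v = Lam w0" using Sm_D(5)[OF x] by simp
    then show False using Lam_inj v by auto
  qed
qed

lemma Sm_eq:
  assumes w0: "w0 \<in> E'"
  shows "Sm (Lam w0) = {x. x \<noteq> 0} \<inter> (\<Inter>v\<in>E' - {w0}. {x. v \<bullet> phi x < w0 \<bullet> phi x})"
proof (intro set_eqI iffI)
  fix x assume x: "x \<in> Sm (Lam w0)"
  have "x \<noteq> 0" by (rule Sm_D(1)[OF x])
  moreover have "\<forall>v\<in>E' - {w0}. v \<bullet> phi x < w0 \<bullet> phi x" by (rule SmD[OF w0 x])
  ultimately show "x \<in> {x. x \<noteq> 0} \<inter> (\<Inter>v\<in>E' - {w0}. {x. v \<bullet> phi x < w0 \<bullet> phi x})" by simp
next
  fix x assume "x \<in> {x. x \<noteq> 0} \<inter> (\<Inter>v\<in>E' - {w0}. {x. v \<bullet> phi x < w0 \<bullet> phi x})"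
  then have "x \<noteq> 0" "\<forall>v\<in>E' - {w0}. v \<bullet> phi x < w0 \<bullet> phi x" by auto
  then show "x \<in> Sm (Lam w0)" by (rule SmI[OF w0])
qed

lemma Sm_open:
  assumes w0: "w0 \<in> E'"
  shows "open (Sm (Lam w0))"
proof -
  have c: "continuous_on UNIV (\<lambda>x. v \<bullet> phi x)" for v
    using Lam_cont[of v] by (simp add: Lam_def)
  have "open {x::'a. x \<noteq> 0}" by (rule open_Collect_neq) (auto intro: continuous_intros)
  moreover have "open (\<Inter>v\<in>E' - {w0}. {x. v \<bullet> phi x < w0 \<bullet> phi x})"
    using E'_finite by (intro open_INT ballI open_Collect_less c) auto
  ultimately show ?thesis unfolding Sm_eq[OF w0] by (rule open_Int)
qed

lemma E'_not_single: "w0 \<in> E' \<Longrightarrow> E' - {w0} \<noteq> {}"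
proof
  assume w0: "w0 \<in> E'" and "E' - {w0} = {}"
  then have "E' = {w0}" by auto
  then have "W = {w0}" using W_hull by simp
  then have Wz: "W = {0}" using zero_W by auto
  obtain x :: 'a where x: "x \<noteq> 0" using nontriv by blast
  obtain w where "w \<in> W" "w \<bullet> phi x = norm x" using HB by blast
  then show False using Wz x by auto
qed

lemma Sm_closure:
  assumes w0: "w0 \<in> E'" and x: "w0 \<bullet> phi x = norm x"
  shows "x \<in> closure (Sm (Lam w0))"
  unfolding closure_approachable
proof (intro allI impI)
  fix e :: real assume e: "e > 0"
  obtain z where z: "\<forall>v\<in>E' - {w0}. v \<bullet> phi z < w0 \<bullet> phi z" using sep[OF w0] by blast
  define t where "t = e / (norm z + 1)"
  have p: "norm z + 1 > 0" using norm_ge_zero[of z] by linarith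
  have t: "t > 0" using e p by (simp add: t_def)
  have "t * norm z < e"
  proof -
    have "e * norm z < e * (norm z + 1)" using e by simp
    then show ?thesis using p by (simp add: t_def field_simps)
  qed
  then have d: "dist (x + t *\<^sub>R z) x < e" using t by (simp add: dist_norm)
  have lt: "\<forall>v\<in>E' - {w0}. v \<bullet> phi (x + t *\<^sub>R z) < w0 \<bullet> phi (x + t *\<^sub>R z)"
  proof
    fix v assume v: "v \<in> E' - {w0}"
    have "v \<bullet> phi x \<le> norm x" using v E'_le by auto
    moreover have "v \<bullet> phi z < w0 \<bullet> phi z" using z v by blast
    then have "t * (v \<bullet> phi z) < t * (w0 \<bullet> phi z)" using t by simp
    moreover have "phi (x + t *\<^sub>R z) = phi x + t *\<^sub>R phi z"
      by (simp add: linear_add[OF lin] linear_scale[OF lin])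
    ultimately show "v \<bullet> phi (x + t *\<^sub>R z) < w0 \<bullet> phi (x + t *\<^sub>R z)"
      using x by (simp add: inner_add_right)
  qed
  have "x + t *\<^sub>R z \<noteq> 0"
  proof
    assume eq0: "x + t *\<^sub>R z = 0"
    obtain v where v: "v \<in> E' - {w0}" using E'_not_single[OF w0] by blast
    have "v \<bullet> phi (x + t *\<^sub>R z) < w0 \<bullet> phi (x + t *\<^sub>R z)" using lt v by blast
    then show False unfolding eq0 by (simp add: linear_0[OF lin])
  qed
  then have "x + t *\<^sub>R z \<in> Sm (Lam w0)" using SmI[OF w0 _ lt] by simp
  then show "\<exists>y\<in>Sm (Lam w0). dist y x < e" using d by blast
qed

lemma Sm_ne: "w0 \<in> E' \<Longrightarrow> Sm (Lam w0) \<noteq> {}"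
proof -
  assume w0: "w0 \<in> E'"
  have "w0 \<bullet> phi 0 = norm (0::'a)" by (simp add: linear_0[OF lin])
  from Sm_closure[OF w0 this] show ?thesis by (metis closure_empty empty_iff)
qed

lemma M3:
  assumes u: "u \<noteq> 0"
  shows "(\<exists>w\<in>E'. u \<in> Sm (Lam w)) \<or> (\<exists>v1\<in>E'. \<exists>v2\<in>E'. v1 \<noteq> v2 \<and> v1 \<bullet> phi u = norm u \<and> v2 \<bullet> phi u = norm u)"
proof (cases "\<exists>v1\<in>E'. \<exists>v2\<in>E'. v1 \<noteq> v2 \<and> v1 \<bullet> phi u = norm u \<and> v2 \<bullet> phi u = norm u")
  case True then show ?thesis by blast
next
  case False
  obtain v where v: "v \<in> E'" "v \<bullet> phi u = norm u" using N1a by blast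
  have "J u = {Lam v}"
  proof
    show "{Lam v} \<subseteq> J u" using Lam_J[OF _ u v(2)] v E'_W by auto
    show "J u \<subseteq> {Lam v}"
    proof
      fix h assume h: "h \<in> J u"
      have "h = Lam v" by (rule N1b[OF h]) (use False v in auto)
      then show "h \<in> {Lam v}" by simp
    qed
  qed
  then show ?thesis using u v by (auto simp: Sm_def)
qed

lemma ext_Lam:
  fixes f :: "'a \<Rightarrow> real"
  assumes "f \<in> dual_ext" shows "\<exists>w\<in>E'. f = Lam w"
proof -
  have "f \<in> Lam ` E'" using assms dual_ext_eq by blast
  then show ?thesis by blast
qed

lemma J_ne: "u \<noteq> 0 \<Longrightarrow> \<exists>w\<in>E'. Lam w \<in> J u"
proof -
  assume u: "u \<noteq> 0"
  obtain v where v: "v \<in> E'" "v \<bullet> phi u = norm u" using N1a by blast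
  have "Lam v \<in> J u" using Lam_J[OF _ u v(2)] v(1) E'_W by blast
  then show ?thesis using v(1) by blast
qed

end

definition isbasis :: "'a::real_vector set \<Rightarrow> bool" where
  "isbasis B \<longleftrightarrow> finite B \<and> independent B \<and> span B = UNIV \<and> B \<noteq> {}"
definition idxset :: "'a::real_vector set" where
  "idxset = (SOME B. isbasis B \<or> ((\<forall>B'::'a set. \<not> isbasis B') \<and> B = {0}))"
lemma idxset_cases: "isbasis (idxset :: 'a::real_vector set) \<or> ((\<forall>B'::'a set. \<not> isbasis B') \<and> (idxset::'a set) = {0})"
proof -
  have "\<exists>B::'a set. isbasis B \<or> ((\<forall>B'::'a set. \<not> isbasis B') \<and> B = {0})"
  proof (cases "\<exists>B'::'a set. isbasis B'")
    case True then show ?thesis by blast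
  next
    case False then show ?thesis by blast
  qed
  from someI_ex[OF this] show ?thesis unfolding idxset_def .
qed
lemma idxset_finite: "finite (idxset :: 'a::real_vector set)"
proof -
  have "finite ({0} :: 'a set)" by simp
  then show ?thesis using idxset_cases[where 'a='a] unfolding isbasis_def by metis
qed
lemma idxset_ne: "(idxset :: 'a::real_vector set) \<noteq> {}"
proof -
  have "({0} :: 'a set) \<noteq> {}" by simp
  then show ?thesis using idxset_cases[where 'a='a] unfolding isbasis_def by metis
qed
lemma idxset_basis:
  assumes "isbasis (B::'a::real_vector set)"
  shows "independent (idxset :: 'a set)" "span (idxset :: 'a set) = UNIV"
proof -
  have "isbasis (idxset :: 'a set)" using idxset_cases[where 'a='a] assms by blast
  then show "independent (idxset :: 'a set)" "span (idxset :: 'a set) = UNIV" unfolding isbasis_def by auto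
qed

typedef (overloaded) ('a::real_vector) idx = "idxset :: 'a set"
  using idxset_ne by blast

instance idx :: (real_vector) finite
proof
  have "(UNIV :: 'a idx set) = Abs_idx ` idxset"
    using type_definition.Abs_image[OF type_definition_idx] by (rule sym)
  then show "finite (UNIV :: 'a idx set)" using idxset_finite by (metis finite_imageI)
qed

definition psi0 :: "real^('a::real_vector idx) \<Rightarrow> 'a" where
  "psi0 v = (\<Sum>i\<in>UNIV. (v $ i) *\<^sub>R Rep_idx i)"

lemma psi0_linear: "linear psi0"
  by (rule linearI) (simp_all add: psi0_def scaleR_add_left sum.distrib scaleR_sum_right)

lemma sum_idx: "(\<Sum>i\<in>UNIV. g (Rep_idx i)) = (\<Sum>b\<in>(idxset::'a::real_vector set). g b)"
proof -
  have r: "Rep_idx ` UNIV = (idxset::'a set)" by (rule type_definition.Rep_range[OF type_definition_idx])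
  have "(\<Sum>b\<in>(idxset::'a set). g b) = (\<Sum>b\<in>Rep_idx ` UNIV. g b)"
    by (simp only: r)
  also have "\<dots> = (\<Sum>i\<in>UNIV. g (Rep_idx i))"
    using sum.reindex[of Rep_idx UNIV g] by (simp add: inj_on_def Rep_idx_inject o_def)
  finally show ?thesis by simp
qed

lemma psi0_bij:
  assumes "isbasis (B::'a::real_vector set)"
  shows "bij (psi0 :: real^('a idx) \<Rightarrow> 'a)"
proof (rule bijI)
  note ind = idxset_basis(1)[OF assms] and sp = idxset_basis(2)[OF assms]
  show "inj (psi0 :: real^('a idx) \<Rightarrow> 'a)"
  proof (rule linear_inj_iff_eq_0[THEN iffD2, OF psi0_linear], intro allI impI)
    fix v :: "real^('a idx)" assume v: "psi0 v = 0"
    define u where "u b = v $ Abs_idx b" for b :: 'a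
    have "(\<Sum>b\<in>(idxset::'a set). u b *\<^sub>R b) = 0"
      using v sum_idx[of "\<lambda>b. u b *\<^sub>R b"] by (simp add: psi0_def u_def Rep_idx_inverse)
    then have "\<forall>b\<in>idxset. u b = 0" using ind dependent_finite[OF idxset_finite] by blast
    then show "v = 0"
      by (simp add: vec_eq_iff u_def) (metis Rep_idx Rep_idx_inverse)
  qed
  show "surj (psi0 :: real^('a idx) \<Rightarrow> 'a)"
  proof
    show "range psi0 \<subseteq> UNIV" by simp
    show "UNIV \<subseteq> range (psi0 :: real^('a idx) \<Rightarrow> 'a)"
    proof
      fix y :: 'a
      have "y \<in> span idxset" using sp by simp
      have e: "span (idxset::'a set) = range (\<lambda>u. \<Sum>b\<in>(idxset::'a set). u b *\<^sub>R b)"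
        by (rule span_finite[OF idxset_finite])
      have "y \<in> range (\<lambda>u. \<Sum>b\<in>(idxset::'a set). u b *\<^sub>R b)"
        using \<open>y \<in> span idxset\<close> unfolding e .
      then obtain u where u: "(\<Sum>b\<in>idxset. u b *\<^sub>R b) = y" by (auto elim!: rangeE)
      define v :: "real^('a idx)" where "v = (\<chi> i. u (Rep_idx i))"
      have "psi0 v = (\<Sum>i\<in>UNIV. u (Rep_idx i) *\<^sub>R Rep_idx i)" by (simp add: psi0_def v_def)
      also have "\<dots> = (\<Sum>b\<in>idxset. u b *\<^sub>R b)" by (rule sum_idx)
      finally have "psi0 v = y" using u by simp
      then show "y \<in> range (psi0 :: real^('a idx) \<Rightarrow> 'a)" by blast
    qed
  qed
qed

lemma exists_basis:
  assumes "fin_dim_space TYPE('a::real_normed_vector)" "\<exists>x::'a. x \<noteq> 0"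
  shows "\<exists>B::'a set. isbasis B"
proof -
  obtain S :: "'a set" where S: "finite S" "span S = UNIV" using assms(1) by (auto simp: fin_dim_space_def)
  obtain B where B: "B \<subseteq> S" "independent B" "S \<subseteq> span B" by (rule maximal_independent_subset)
  have "span S \<subseteq> span B" using B(3) by (simp add: span_minimal)
  then have sB: "span B = UNIV" using S(2) by auto
  have "B \<noteq> {}" using sB assms(2) by auto
  then have "isbasis B" using B S sB finite_subset unfolding isbasis_def by blast
  then show ?thesis by blast
qed

lemma exists_pfdim:
  assumes "fin_dim_space TYPE('a::real_normed_vector)" "polyhedral TYPE('a)" "\<exists>x::'a. x \<noteq> 0"
  shows "pfdim (inv (psi0 :: real^('a idx) \<Rightarrow> 'a))"
proof -
  obtain B :: "'a set" where "isbasis B" using exists_basis[OF assms(1,3)] by blast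
  then have b: "bij (psi0 :: real^('a idx) \<Rightarrow> 'a)" by (rule psi0_bij)
  show ?thesis
  proof (unfold pfdim_def fdim_def pfdim_axioms_def, intro conjI)
    show "linear (inv (psi0 :: real^('a idx) \<Rightarrow> 'a))" by (rule linear_bij_inv[OF psi0_linear b])
    show "bij (inv (psi0 :: real^('a idx) \<Rightarrow> 'a))" by (rule bij_imp_bij_inv[OF b])
    show "polyhedral TYPE('a)" by fact
  qed
qed

context pfdim begin

lemma Sm_TEA_eq:
  fixes a b :: 'a
  assumes "TEA_pair a b" "a \<in> Sm g1" "b \<in> Sm g2"
  shows "g1 = g2"
proof -
  have "norm a > 0" using Sm_D(1)[OF assms(2)] by simp
  then have "norm (a + b) > 0" using assms(1) unfolding TEA_pair_def by (smt (verit) norm_ge_zero)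
  then have "a + b \<noteq> 0" by auto
  then obtain w where "Lam w \<in> J (a + b)" using J_ne by blast
  then have "Lam w \<in> J a" "Lam w \<in> J b" using TEA_J[OF assms(1)] by auto
  then show ?thesis using Sm_D(5)[OF assms(2)] Sm_D(5)[OF assms(3)] by auto
qed

lemma TEA_ext:
  fixes x y :: 'a
  assumes "TEA_pair x y" "x + y \<noteq> 0"
  shows "\<exists>w\<in>E'. x \<in> closure (Sm (Lam w)) \<and> y \<in> closure (Sm (Lam w))"
proof -
  obtain w where w: "w \<in> E'" "Lam w \<in> J (x + y)" using J_ne[OF assms(2)] by blast
  then have "Lam w \<in> J x" "Lam w \<in> J y" using TEA_J[OF assms(1)] by auto
  then have "w \<bullet> phi x = norm x" "w \<bullet> phi y = norm y" by (auto simp: supp_funcs_def Lam_def)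
  then show ?thesis using Sm_closure[OF w(1)] w(1) by blast
qed

lemma Lam_ext: "w \<in> E' \<Longrightarrow> Lam w \<in> dual_ext"
  using dual_ext_eq by blast

end

lemma TEA_zero: "TEA_pair x y \<Longrightarrow> x + y = 0 \<Longrightarrow> x = 0 \<and> y = 0"
  unfolding TEA_pair_def by (smt (verit) norm_eq_zero norm_ge_zero)

lemma TEA_00: "TEA_pair 0 0" by (simp add: TEA_pair_def)

lemma closed_func:
  assumes "g \<in> dual_ball" "bounded_linear T"
  shows "closed {x. g (T x) = norm (T x)}"
proof -
  have bg: "bounded_linear g" using assms(1) by (simp add: dual_ball_def)
  have c1: "continuous_on UNIV (\<lambda>x. g (T x))"
    using linear_continuous_on[OF bounded_linear_compose[OF bg assms(2)]] by simp
  have c2: "continuous_on UNIV (\<lambda>x. norm (T x))"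
    by (intro continuous_intros linear_continuous_on assms(2))
  show ?thesis by (rule closed_Collect_eq[OF c1 c2])
qed

lemma core:
  fixes T :: "'a::real_normed_vector \<Rightarrow> 'b::real_normed_vector"
    and phiX :: "'a \<Rightarrow> 'n::euclidean_space" and phiY :: "'b \<Rightarrow> 'm::euclidean_space"
  assumes X: "pfdim phiX" and Y: "pfdim phiY" and linT: "linear T" and bijT: "bij T"
  shows "((\<forall>x y. parallel_pair x y \<longrightarrow> parallel_pair (T x) (T y))
          \<longleftrightarrow> (\<forall>x y. TEA_pair x y \<longrightarrow> TEA_pair (T x) (T y)))
       \<and> ((\<forall>x y. TEA_pair x y \<longrightarrow> TEA_pair (T x) (T y))
          \<longleftrightarrow> (\<forall>f\<in>(dual_ext :: ('a \<Rightarrow> real) set).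
                 \<exists>!g. g \<in> (dual_ext :: ('b \<Rightarrow> real) set) \<and> T ` Sm f \<subseteq> Sm g))"
proof -
  interpret X: pfdim phiX by (rule X)
  interpret Y: pfdim phiY by (rule Y)
  have Tbl: "bounded_linear T" by (rule X.lin_bl[OF linT])
  have injT: "inj T" using bijT bij_is_inj by blast
  have T0: "T 0 = 0" by (rule linear_0[OF linT])
  have Tnz: "x \<noteq> 0 \<Longrightarrow> T x \<noteq> 0" for x using injT T0 by (metis injD)
  have linTi: "linear (inv T)" by (rule linear_bij_inv[OF linT bijT])
  have Tibl: "bounded_linear (inv T)" by (rule Y.lin_bl[OF linTi])
  have Topen: "open (T ` S)" if "open S" for S
  proof -
    have "T ` S = inv T -` S \<inter> UNIV"
    proof (intro set_eqI iffI)
      fix z assume "z \<in> T ` S"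
      then obtain x where "x \<in> S" "z = T x" by blast
      then show "z \<in> inv T -` S \<inter> UNIV" using injT by simp
    next
      fix z assume "z \<in> inv T -` S \<inter> UNIV"
      then have "inv T z \<in> S" by simp
      moreover have "z = T (inv T z)" using bijT by (simp add: bij_is_surj surj_f_inv_f)
      ultimately show "z \<in> T ` S" by blast
    qed
    moreover have "continuous_on UNIV (inv T)" by (rule linear_continuous_on[OF Tibl])
    ultimately show ?thesis using continuous_on_open_vimage[OF open_UNIV] that by metis
  qed

  have BA: "\<forall>x y. parallel_pair x y \<longrightarrow> parallel_pair (T x) (T y)"
    if B: "\<forall>x y. TEA_pair x y \<longrightarrow> TEA_pair (T x) (T y)"
  proof (intro allI impI)
    fix x y :: 'a assume "parallel_pair x y"
    then obtain c where c: "\<bar>c\<bar> = 1" "norm (x + c *\<^sub>R y) = norm x + norm y" by (auto simp: parallel_pair_def)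
    then have "TEA_pair x (c *\<^sub>R y)" by (simp add: TEA_pair_def)
    then have "TEA_pair (T x) (T (c *\<^sub>R y))" using B by blast
    then have "TEA_pair (T x) (c *\<^sub>R T y)" by (simp add: linear_scale[OF linT])
    then show "parallel_pair (T x) (T y)" using c(1) by (auto simp: TEA_pair_def parallel_pair_def)
  qed

  have AB: "\<forall>x y. TEA_pair x y \<longrightarrow> TEA_pair (T x) (T y)"
    if A: "\<forall>x y. parallel_pair x y \<longrightarrow> parallel_pair (T x) (T y)"
  proof (intro allI impI)
    fix x y :: 'a assume xy: "TEA_pair x y"
    show "TEA_pair (T x) (T y)"
    proof (cases "x + y = 0")
      case True then show ?thesis using TEA_zero[OF xy] T0 TEA_00 by simp
    next
      case False
      obtain w0 where w0: "w0 \<in> X.E'" "x \<in> closure (Sm (X.Lam w0))" "y \<in> closure (Sm (X.Lam w0))"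
        using X.TEA_ext[OF xy False] by blast
      define f where "f = X.Lam w0"
      obtain x1 where x1: "x1 \<in> Sm f" using X.Sm_ne[OF w0(1)] unfolding f_def by blast
      have oV: "open (T ` Sm f)" unfolding f_def by (intro Topen X.Sm_open w0(1))
      have u0: "T x1 \<noteq> 0" using Tnz Sm_D(1)[OF x1] by blast
      obtain v where v: "v \<in> Y.E'" "Y.Lam v \<in> J (T x1)" using Y.J_ne[OF u0] by blast
      have "v \<bullet> phiY (T x1) = norm (T x1)" using v(2) by (simp add: supp_funcs_def Y.Lam_def)
      then have "T x1 \<in> closure (Sm (Y.Lam v))" by (rule Y.Sm_closure[OF v(1)])
      moreover have "T x1 \<in> T ` Sm f" using x1 by blast
      ultimately have "T ` Sm f \<inter> Sm (Y.Lam v) \<noteq> {}"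
        using open_Int_closure_eq_empty[OF oV, of "Sm (Y.Lam v)"] by blast
      then obtain x0 where x0: "x0 \<in> Sm f" "T x0 \<in> Sm (Y.Lam v)" by blast
      define g where "g = Y.Lam v"
      have gb: "g \<in> dual_ball" unfolding g_def by (rule Y.Lam_ball) (use v(1) Y.E'_W in blast)
      have gbl: "bounded_linear g" using gb by (simp add: dual_ball_def)
      have glin: "linear g" using gbl bounded_linear.linear by blast
      have gT0: "g (T x0) = norm (T x0)" using Sm_D(3)[OF x0(2)] by (simp add: g_def)
      have abs_eq: "\<bar>g (T z)\<bar> = norm (T z)" if z: "z \<in> Sm f" for z
      proof -
        have "TEA_pair x0 z" by (rule Sm_TEA[OF x0(1) z])
        then have "parallel_pair x0 z" unfolding TEA_pair_def parallel_pair_def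
          by (intro exI[of _ 1]) simp
        then have "parallel_pair (T x0) (T z)" using A by blast
        then obtain c where c: "\<bar>c\<bar> = 1" "norm (T x0 + c *\<^sub>R T z) = norm (T x0) + norm (T z)"
          by (auto simp: parallel_pair_def)
        have ncz: "norm (c *\<^sub>R T z) = norm (T z)" using c(1) by simp
        then have tea: "TEA_pair (T x0) (c *\<^sub>R T z)" using c(2) by (simp add: TEA_pair_def)
        have "norm (T x0) > 0" using Tnz Sm_D(1)[OF x0(1)] by simp
        then have "T x0 + c *\<^sub>R T z \<noteq> 0" using c(2) by (smt (verit) norm_ge_zero norm_zero)
        then obtain w where "Y.Lam w \<in> J (T x0 + c *\<^sub>R T z)" using Y.J_ne by blast
        then have h: "Y.Lam w \<in> J (T x0)" "Y.Lam w \<in> J (c *\<^sub>R T z)" using TEA_J[OF tea] by auto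
        then have "Y.Lam w = g" using Sm_D(5)[OF x0(2)] by (simp add: g_def)
        then have "g (c *\<^sub>R T z) = norm (T z)" using h(2) ncz by (auto simp: supp_funcs_def)
        then have cg: "c * g (T z) = norm (T z)" by (simp add: linear_scale[OF glin])
        have "c = 1 \<or> c = -1" using c(1) by (auto simp: abs_if split: if_splits)
        then show ?thesis
        proof
          assume "c = 1" then have "g (T z) = norm (T z)" using cg by simp
          then show ?thesis by simp
        next
          assume "c = -1" then have "g (T z) = - norm (T z)" using cg by simp
          then show ?thesis by simp
        qed
      qed
      have pos: "g (T z) = norm (T z)" if z: "z \<in> Sm f" for z
      proof (rule ccontr)
        assume ne: "g (T z) \<noteq> norm (T z)"
        then have gz: "g (T z) = - norm (T z)" using abs_eq[OF z] by (auto simp: abs_if split: if_splits)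
        define \<alpha> where "\<alpha> = norm (T x0)"
        define \<beta> where "\<beta> = norm (T z)"
        have a: "\<alpha> > 0" using Tnz Sm_D(1)[OF x0(1)] by (simp add: \<alpha>_def)
        have b: "\<beta> > 0" using Tnz Sm_D(1)[OF z] by (simp add: \<beta>_def)
        define t where "t = \<alpha> / (\<alpha> + \<beta>)"
        have t: "0 \<le> t" "t \<le> 1" using a b by (auto simp: t_def)
        define z' where "z' = (1 - t) *\<^sub>R x0 + t *\<^sub>R z"
        have z': "z' \<in> Sm f" unfolding z'_def by (rule Sm_convex[OF x0(1) z t])
        have "g (T z') = (1 - t) * \<alpha> - t * \<beta>"
          using gT0 gz by (simp add: z'_def linear_add[OF linT] linear_scale[OF linT]
              linear_add[OF glin] linear_scale[OF glin] \<alpha>_def \<beta>_def)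
        also have "\<dots> = 0" using a b by (simp add: t_def field_simps)
        finally have "norm (T z') = 0" using abs_eq[OF z'] by simp
        then show False using Tnz Sm_D(1)[OF z'] by simp
      qed
      have "Sm f \<subseteq> {v. g (T v) = norm (T v)}" using pos by blast
      then have "closure (Sm f) \<subseteq> {v. g (T v) = norm (T v)}"
        by (rule closure_minimal[OF _ closed_func[OF gb Tbl]])
      then have "g (T x) = norm (T x)" "g (T y) = norm (T y)" using w0(2,3) by (auto simp: f_def)
      then show ?thesis by (rule TEA_by_functional[OF gb])
    qed
  qed
  have BC: "\<forall>f\<in>(dual_ext :: ('a \<Rightarrow> real) set).
                 \<exists>!g. g \<in> (dual_ext :: ('b \<Rightarrow> real) set) \<and> T ` Sm f \<subseteq> Sm g"
    if B: "\<forall>x y. TEA_pair x y \<longrightarrow> TEA_pair (T x) (T y)"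
  proof
    fix f :: "'a \<Rightarrow> real" assume f: "f \<in> dual_ext"
    obtain w0 where w0: "w0 \<in> X.E'" "f = X.Lam w0" using X.ext_Lam[OF f] by blast
    have oV: "open (T ` Sm f)" unfolding w0(2) by (intro Topen X.Sm_open w0(1))
    have clA: "\<exists>g\<in>(dual_ext :: ('b \<Rightarrow> real) set). T x \<in> Sm g" if x: "x \<in> Sm f" for x
    proof -
      have u: "T x \<noteq> 0" using Tnz Sm_D(1)[OF x] by blast
      from Y.M3[OF u] show ?thesis
      proof
        assume "\<exists>w\<in>Y.E'. T x \<in> Sm (Y.Lam w)"
        then show ?thesis using Y.Lam_ext by blast
      next
        assume "\<exists>v1\<in>Y.E'. \<exists>v2\<in>Y.E'. v1 \<noteq> v2 \<and> v1 \<bullet> phiY (T x) = norm (T x) \<and> v2 \<bullet> phiY (T x) = norm (T x)"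
        then obtain v1 v2 where v: "v1 \<in> Y.E'" "v2 \<in> Y.E'" "v1 \<noteq> v2"
          "v1 \<bullet> phiY (T x) = norm (T x)" "v2 \<bullet> phiY (T x) = norm (T x)" by blast
        have Tx: "T x \<in> T ` Sm f" using x by blast
        have "T x \<in> closure (Sm (Y.Lam v1))" by (rule Y.Sm_closure[OF v(1) v(4)])
        then have "T ` Sm f \<inter> Sm (Y.Lam v1) \<noteq> {}"
          using open_Int_closure_eq_empty[OF oV, of "Sm (Y.Lam v1)"] Tx by blast
        then obtain x1 where x1: "x1 \<in> Sm f" "T x1 \<in> Sm (Y.Lam v1)" by blast
        have "T x \<in> closure (Sm (Y.Lam v2))" by (rule Y.Sm_closure[OF v(2) v(5)])
        then have "T ` Sm f \<inter> Sm (Y.Lam v2) \<noteq> {}"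
          using open_Int_closure_eq_empty[OF oV, of "Sm (Y.Lam v2)"] Tx by blast
        then obtain x2 where x2: "x2 \<in> Sm f" "T x2 \<in> Sm (Y.Lam v2)" by blast
        have "TEA_pair (T x1) (T x2)" using B Sm_TEA[OF x1(1) x2(1)] by blast
        then have "Y.Lam v1 = Y.Lam v2" by (rule Y.Sm_TEA_eq[OF _ x1(2) x2(2)])
        then have "v1 = v2" by (rule Y.Lam_inj)
        then show ?thesis using v(3) by simp
      qed
    qed
    obtain x0 where x0: "x0 \<in> Sm f" using X.Sm_ne[OF w0(1)] unfolding w0(2) by blast
    obtain g0 where g0: "g0 \<in> (dual_ext :: ('b \<Rightarrow> real) set)" "T x0 \<in> Sm g0" using clA[OF x0] by blast
    have sub: "T ` Sm f \<subseteq> Sm g0"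
    proof
      fix u assume "u \<in> T ` Sm f"
      then obtain y where y: "y \<in> Sm f" "u = T y" by blast
      obtain g' where g': "T y \<in> Sm g'" using clA[OF y(1)] by blast
      have "TEA_pair (T x0) (T y)" using B Sm_TEA[OF x0 y(1)] by blast
      then have "g0 = g'" by (rule Y.Sm_TEA_eq[OF _ g0(2) g'])
      then show "u \<in> Sm g0" using g' y(2) by simp
    qed
    show "\<exists>!g. g \<in> (dual_ext :: ('b \<Rightarrow> real) set) \<and> T ` Sm f \<subseteq> Sm g"
    proof (rule ex1I[of _ g0])
      show "g0 \<in> dual_ext \<and> T ` Sm f \<subseteq> Sm g0" using g0(1) sub by blast
      fix g assume g: "g \<in> (dual_ext :: ('b \<Rightarrow> real) set) \<and> T ` Sm f \<subseteq> Sm g"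
      then have "T x0 \<in> Sm g" using x0 by blast
      then have "J (T x0) = {g}" by (rule Sm_D(5))
      moreover have "J (T x0) = {g0}" using g0(2) by (rule Sm_D(5))
      ultimately show "g = g0" by simp
    qed
  qed

  have CB: "\<forall>x y. TEA_pair x y \<longrightarrow> TEA_pair (T x) (T y)"
    if C: "\<forall>f\<in>(dual_ext :: ('a \<Rightarrow> real) set).
                 \<exists>!g. g \<in> (dual_ext :: ('b \<Rightarrow> real) set) \<and> T ` Sm f \<subseteq> Sm g"
  proof (intro allI impI)
    fix x y :: 'a assume xy: "TEA_pair x y"
    show "TEA_pair (T x) (T y)"
    proof (cases "x + y = 0")
      case True then show ?thesis using TEA_zero[OF xy] T0 TEA_00 by simp
    next
      case False
      obtain w0 where w0: "w0 \<in> X.E'" "x \<in> closure (Sm (X.Lam w0))" "y \<in> closure (Sm (X.Lam w0))"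
        using X.TEA_ext[OF xy False] by blast
      have "X.Lam w0 \<in> dual_ext" by (rule X.Lam_ext[OF w0(1)])
      then obtain g where g: "g \<in> (dual_ext :: ('b \<Rightarrow> real) set)" "T ` Sm (X.Lam w0) \<subseteq> Sm g"
        using C by blast
      have gb: "g \<in> dual_ball" using g(1) dual_ext_ball by blast
      have "Sm (X.Lam w0) \<subseteq> {v. g (T v) = norm (T v)}"
      proof
        fix v assume "v \<in> Sm (X.Lam w0)"
        then have "T v \<in> Sm g" using g(2) by blast
        then show "v \<in> {v. g (T v) = norm (T v)}" using Sm_D(3) by simp
      qed
      then have "closure (Sm (X.Lam w0)) \<subseteq> {v. g (T v) = norm (T v)}"
        by (rule closure_minimal[OF _ closed_func[OF gb Tbl]])
      then have "g (T x) = norm (T x)" "g (T y) = norm (T y)" using w0(2,3) by auto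
      then show ?thesis by (rule TEA_by_functional[OF gb])
    qed
  qed
  show ?thesis using AB BA BC CB by blast
qed

lemma trivial_dual_ext:
  assumes triv: "\<forall>y::'b::real_normed_vector. y = 0"
  shows "(dual_ext :: ('b \<Rightarrow> real) set) = {\<lambda>_. 0}"
proof -
  have z: "g = (\<lambda>_. 0)" if "g \<in> (dual_ball :: ('b \<Rightarrow> real) set)" for g
  proof
    fix y :: 'b
    have "linear g" using that by (auto simp: dual_ball_def bounded_linear.linear)
    then show "g y = 0" using triv linear_0 by metis
  qed
  have zb: "(\<lambda>_. 0) \<in> (dual_ball :: ('b \<Rightarrow> real) set)" by (simp add: dual_ball_def onorm_zero)
  have a: "(\<lambda>_. 0) \<in> (dual_ext :: ('b \<Rightarrow> real) set)"
    unfolding dual_ext_def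
  proof (intro CollectI conjI ballI allI impI)
    show "(\<lambda>_. 0) \<in> (dual_ball :: ('b \<Rightarrow> real) set)" by (rule zb)
    fix g h :: "'b \<Rightarrow> real" and t :: real
    assume "g \<in> dual_ball" "h \<in> dual_ball"
    then show "g = h" using z by metis
  qed
  have b: "(dual_ext :: ('b \<Rightarrow> real) set) \<subseteq> {\<lambda>_. 0}"
  proof
    fix g :: "'b \<Rightarrow> real" assume "g \<in> dual_ext"
    then have "g \<in> dual_ball" using dual_ext_ball by blast
    then show "g \<in> {\<lambda>_. 0}" using z by simp
  qed
  from a b show ?thesis by blast
qed

theorem mainTheorem15:
  fixes T :: "'a::real_normed_vector \<Rightarrow> 'b::real_normed_vector"
  assumes "fin_dim_space TYPE('a)" and "fin_dim_space TYPE('b)"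
    and "polyhedral TYPE('a)" and "polyhedral TYPE('b)"
    and "linear T" and "bij T"
  shows "((\<forall>x y. parallel_pair x y \<longrightarrow> parallel_pair (T x) (T y))
          \<longleftrightarrow> (\<forall>x y. TEA_pair x y \<longrightarrow> TEA_pair (T x) (T y)))
       \<and> ((\<forall>x y. TEA_pair x y \<longrightarrow> TEA_pair (T x) (T y))
          \<longleftrightarrow> (\<forall>f\<in>(dual_ext :: ('a \<Rightarrow> real) set).
                 \<exists>!g. g \<in> (dual_ext :: ('b \<Rightarrow> real) set) \<and> T ` Sm f \<subseteq> Sm g))"
proof (cases "\<exists>x::'a. x \<noteq> 0")
  case True
  have T0: "T 0 = 0" by (rule linear_0[OF assms(5)])
  obtain x :: 'a where x: "x \<noteq> 0" using True by blast
  have "T x \<noteq> 0" using x T0 assms(6) by (metis bij_is_inj injD)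
  then have nb: "\<exists>y::'b. y \<noteq> 0" by blast
  have X: "pfdim (inv (psi0 :: real^('a idx) \<Rightarrow> 'a))" by (rule exists_pfdim[OF assms(1,3) True])
  have Y: "pfdim (inv (psi0 :: real^('b idx) \<Rightarrow> 'b))" by (rule exists_pfdim[OF assms(2,4) nb])
  from core[OF X Y assms(5,6)] show ?thesis .
next
  case False
  then have ta: "\<forall>x::'a. x = 0" by blast
  have T0: "T 0 = 0" by (rule linear_0[OF assms(5)])
  have tb: "\<forall>y::'b. y = 0"
  proof
    fix y :: 'b
    have e1: "T (inv T y) = y" using assms(6) by (simp add: bij_is_surj surj_f_inv_f)
    have e2: "inv T y = 0" using ta by blast
    from e1 show "y = 0" unfolding e2 T0 by simp
  qed
  have P: "\<forall>x y. parallel_pair x y \<longrightarrow> parallel_pair (T x) (T y)"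
  proof (intro allI impI)
    fix x y :: 'a
    have "T x = 0" "T y = 0" using tb by blast+
    then show "parallel_pair (T x) (T y)" unfolding parallel_pair_def by (intro exI[of _ 1]) simp
  qed
  have Q: "\<forall>x y. TEA_pair x y \<longrightarrow> TEA_pair (T x) (T y)"
  proof (intro allI impI)
    fix x y :: 'a
    have "T x = 0" "T y = 0" using tb by blast+
    then show "TEA_pair (T x) (T y)" by (simp add: TEA_pair_def)
  qed
  have Sm0: "Sm f = {}" for f :: "'a \<Rightarrow> real" using ta by (simp add: Sm_def)
  have R: "\<forall>f\<in>(dual_ext :: ('a \<Rightarrow> real) set).
                 \<exists>!g. g \<in> (dual_ext :: ('b \<Rightarrow> real) set) \<and> T ` Sm f \<subseteq> Sm g"
  proof
    fix f :: "'a \<Rightarrow> real"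
    have de: "(dual_ext :: ('b \<Rightarrow> real) set) = {\<lambda>_. 0}" by (rule trivial_dual_ext[OF tb])
    show "\<exists>!g. g \<in> (dual_ext :: ('b \<Rightarrow> real) set) \<and> T ` Sm f \<subseteq> Sm g"
    proof (rule ex1I[of _ "\<lambda>_. 0"])
      show "(\<lambda>_. 0) \<in> (dual_ext :: ('b \<Rightarrow> real) set) \<and> T ` Sm f \<subseteq> Sm (\<lambda>_. 0)"
        using Sm0[of f] unfolding de by simp
      fix g assume "g \<in> (dual_ext :: ('b \<Rightarrow> real) set) \<and> T ` Sm f \<subseteq> Sm g"
      then show "g = (\<lambda>_. 0)" using de by blast
    qed
  qed
  show ?thesis
  proof (intro conjI iffI)
    show "\<forall>x y. TEA_pair x y \<longrightarrow> TEA_pair (T x) (T y)" by (rule Q)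
    show "\<forall>x y. TEA_pair x y \<longrightarrow> TEA_pair (T x) (T y)" by (rule Q)
    show "\<forall>x y. parallel_pair x y \<longrightarrow> parallel_pair (T x) (T y)" by (rule P)
    show "\<forall>f\<in>(dual_ext :: ('a \<Rightarrow> real) set).
                 \<exists>!g. g \<in> (dual_ext :: ('b \<Rightarrow> real) set) \<and> T ` Sm f \<subseteq> Sm g" by (rule R)
  qed
qed

end
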